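(* Fix $\Theta\in\Omega$ and let $\mu$ be as in the setup. Almost surely there exists $L_0\in\mathbb R$ such that for every $l\ge L_0$ and every $0\le\delta\le l$, $$\mu[l,l+\delta]\le 2\delta\,\frac{\mathbb E[\mu[0,l]]}{l}+\frac{13\log l}{l}.$$
   Context: Let $\Omega$ be the set of sequences $\Theta=(\theta_i)_{i\ge 0}$ of nonnegative reals with $\sum_{i\ge0}\theta_i^2=1$, $\theta_1\ge\theta_2\ge\cdots$, and either $\theta_0\ne0$ or $\sum_{i\ge1}\theta_i=\infty$. For $\Theta\in\Omega$, let $(X_i)_{i\ge1}$ be independent exponential random variables with respective rates $\theta_i$ (a rate-$0$ variable equals $+\infty$), and let $\mu:=\theta_0^2\,dx+\sum_{i\ge1}\theta_i\delta_{X_i}$, a random measure on $\mathbb R^+$. *)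

theory Defs
  imports "HOL-Probability.Probability"
begin

text \<open>The parameter set Omega: theta 0 is the Lebesgue weight, theta i (i >= 1) the atom weights.\<close>
definition in_Omega :: "(nat \<Rightarrow> real) \<Rightarrow> bool" where
  "in_Omega \<theta> \<longleftrightarrow>
     (\<forall>i. 0 \<le> \<theta> i) \<and>
     (\<lambda>i. (\<theta> i)\<^sup>2) sums 1 \<and>
     (\<forall>i\<ge>1. \<theta> (Suc i) \<le> \<theta> i) \<and>
     (\<theta> 0 \<noteq> 0 \<or> \<not> summable (\<lambda>i. \<theta> (Suc i)))"

definition mu_Icc :: "(nat \<Rightarrow> real) \<Rightarrow> (nat \<Rightarrow> 'a \<Rightarrow> real) \<Rightarrow> 'a \<Rightarrow> real \<Rightarrow> real \<Rightarrow> ennreal" where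
  "mu_Icc \<theta> X \<omega> a b =
     ennreal ((\<theta> 0)\<^sup>2 * (b - a)) +
     (\<Sum>i. ennreal (\<theta> (Suc i)) * indicator {a..b} (X (Suc i) \<omega>))"

end

theory Submission
  imports Defs
begin


lemma exp_interval:
  assumes P: "prob_space M" and D: "distributed M lborel Y (exponential_density t)"
    and t: "0 < t" and a: "0 \<le> a" and ab: "a \<le> b"
  shows "emeasure M (Y -` {a..b} \<inter> space M) = ennreal (exp (-t*a) - exp (-t*b))"
proof -
  have "emeasure M (Y -` {a..b} \<inter> space M) =
     (\<integral>\<^sup>+x. ennreal (exponential_density t x) * indicator {a..b} x \<partial>lborel)"
    by (rule distributed_emeasure[OF D]) simp
  also have "\<dots> = (\<integral>\<^sup>+x. ennreal (t * exp (- x * t)) * indicator {a..b} x \<partial>lborel)"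
    by (rule nn_integral_cong) (use a in \<open>auto simp: exponential_density_def split: split_indicator\<close>)
  also have "\<dots> = ennreal ((\<lambda>x. - exp (- x * t)) b - (\<lambda>x. - exp (- x * t)) a)"
  proof (rule nn_integral_FTC_Icc)
    show "(\<lambda>x. t * exp (- x * t)) \<in> borel_measurable borel" by measurable
    fix x assume "x \<in> {a..b}"
    show "((\<lambda>x. - exp (- x * t)) has_real_derivative t * exp (- x * t)) (at x)"
      by (auto intro!: derivative_eq_intros)
    show "0 \<le> t * exp (- x * t)" using t by simp
  qed fact
  finally show ?thesis by (simp add: mult.commute)
qed




lemma factor_integral:
  assumes P: "prob_space M" and D: "distributed M lborel Y (exponential_density t)"
    and t: "0 < t" and a: "0 \<le> a" and ab: "a \<le> b"
  shows "(\<integral>\<^sup>+\<omega>. ennreal (exp (a * (t * indicator {a..b} (Y \<omega>)))) \<partial>M)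
     \<le> ennreal (exp ((b - a) * (t * (1 - exp (- t * a)))))"
proof -
  define s where "s = a"
  have s: "0 \<le> s" using a by (simp add: s_def)
  interpret prob_space M by fact
  have Ym[measurable]: "Y \<in> borel_measurable M"
    using distributed_measurable[OF D] by simp
  define c where "c = exp (s*t) - 1"
  have c0: "0 \<le> c" using s t by (simp add: c_def)
  have "(\<integral>\<^sup>+\<omega>. ennreal (exp (s * (t * indicator {a..b} (Y \<omega>)))) \<partial>M)
      = (\<integral>\<^sup>+\<omega>. 1 + ennreal c * indicator (Y -` {a..b} \<inter> space M) \<omega> \<partial>M)"
  proof (rule nn_integral_cong)
    have e: "ennreal (exp (s*t)) = 1 + ennreal c"
    proof -
      have "exp (s*t) = 1 + c" by (simp add: c_def)
      then show ?thesis using c0 by (simp add: ennreal_plus)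
    qed
    fix x assume "x \<in> space M"
    then show "ennreal (exp (s * (t * indicator {a..b} (Y x)))) = 1 + ennreal c * indicator (Y -` {a..b} \<inter> space M) x"
      using e by (auto split: split_indicator)
  qed
  also have "\<dots> = 1 + ennreal c * emeasure M (Y -` {a..b} \<inter> space M)"
    by (subst nn_integral_add) (auto simp: nn_integral_cmult_indicator emeasure_space_1)
  also have "\<dots> = ennreal (1 + c * (exp (-t*a) - exp (-t*b)))"
  proof -
    have d: "0 \<le> exp (-t*a) - exp (-t*b)" using ab t by simp
    show ?thesis using exp_interval[OF P D t a ab] c0 d
      by (simp add: ennreal_plus ennreal_mult[symmetric])
  qed
  also have "\<dots> \<le> ennreal (exp ((b - a) * (t * (1 - exp (- t * a)))))"
  proof (rule ennreal_leI)
    have eq: "c * (exp (-t*a) - exp (-t*b)) = (1 - exp (-t*a)) * (1 - exp (-t*(b-a)))"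
      by (simp add: c_def s_def algebra_simps flip: exp_add)
    have "1 + c * (exp (-t*a) - exp (-t*b)) \<le> exp (c * (exp (-t*a) - exp (-t*b)))"
      by (rule exp_ge_add_one_self[THEN order_trans[rotated]]) (simp add: add.commute)
    also have "\<dots> \<le> exp ((b - a) * (t * (1 - exp (- t * a))))"
    proof -
      have "1 - exp (-t*(b-a)) \<le> t*(b-a)" using exp_ge_add_one_self[of "-t*(b-a)"] by simp
      moreover have "0 \<le> 1 - exp (-t*a)" using t a by simp
      ultimately have "(1 - exp (-t*a)) * (1 - exp (-t*(b-a))) \<le> (1 - exp (-t*a)) * (t*(b-a))"
        by (rule mult_left_mono)
      then show ?thesis unfolding eq by (simp add: algebra_simps)
    qed
    finally show "1 + c * (exp (-t*a) - exp (-t*b)) \<le> exp ((b - a) * (t * (1 - exp (- t * a))))" .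
  qed
  finally show ?thesis by (simp add: s_def)
qed



definition Gf :: "(nat \<Rightarrow> real) \<Rightarrow> real \<Rightarrow> real" where
  "Gf \<theta> x = (\<Sum>i. \<theta> (Suc i) * (1 - exp (- \<theta> (Suc i) * x)))"

lemma Omega_sq_summable:
  assumes "in_Omega \<theta>" shows "summable (\<lambda>i. (\<theta> (Suc i))\<^sup>2)" and "(\<Sum>i. (\<theta> (Suc i))\<^sup>2) \<le> 1"
proof -
  have s: "(\<lambda>i. (\<theta> i)\<^sup>2) sums 1" using assms by (simp add: in_Omega_def)
  then have sm: "summable (\<lambda>i. (\<theta> i)\<^sup>2)" by (rule sums_summable)
  then show "summable (\<lambda>i. (\<theta> (Suc i))\<^sup>2)" by (subst summable_Suc_iff)
  have "(\<Sum>i. (\<theta> i)\<^sup>2) = (\<theta> 0)\<^sup>2 + (\<Sum>i. (\<theta> (Suc i))\<^sup>2)"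
    using suminf_split_head[OF sm] by simp
  moreover have "0 \<le> (\<theta> 0)\<^sup>2" by simp
  ultimately show "(\<Sum>i. (\<theta> (Suc i))\<^sup>2) \<le> 1" using sums_unique[OF s] by linarith
qed

lemma Gterm_bounds:
  fixes t x :: real
  assumes "0 \<le> t" "0 \<le> x"
  shows "0 \<le> t * (1 - exp (- t * x))" "t * (1 - exp (- t * x)) \<le> t\<^sup>2 * x"
proof -
  show "0 \<le> t * (1 - exp (- t * x))" 
  proof -
    have "- t * x \<le> 0" using mult_nonneg_nonneg[OF assms] by simp
    then have "exp (- t * x) \<le> 1" by simp
    then show ?thesis using assms by simp
  qed
  have "1 - exp (- t * x) \<le> t * x" using exp_ge_add_one_self[of "-t*x"] by simp
  then have "t * (1 - exp (- t * x)) \<le> t * (t * x)" using assms by (intro mult_left_mono) auto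
  then show "t * (1 - exp (- t * x)) \<le> t\<^sup>2 * x" by (simp add: power2_eq_square)
qed

lemma G_summable:
  assumes "in_Omega \<theta>" "0 \<le> x"
  shows "summable (\<lambda>i. \<theta> (Suc i) * (1 - exp (- \<theta> (Suc i) * x)))"
proof (rule summable_comparison_test')
  show "summable (\<lambda>i. (\<theta> (Suc i))\<^sup>2 * x)"
    using Omega_sq_summable(1)[OF assms(1)] by (rule summable_mult2)
  fix n
  have t: "0 \<le> \<theta> (Suc n)" using assms(1) by (simp add: in_Omega_def)
  show "norm (\<theta> (Suc n) * (1 - exp (- \<theta> (Suc n) * x))) \<le> (\<theta> (Suc n))\<^sup>2 * x"
    using Gterm_bounds[OF t assms(2)] by simp
qed

lemma G_nonneg: assumes "in_Omega \<theta>" "0 \<le> x" shows "0 \<le> Gf \<theta> x"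
  unfolding Gf_def using assms
  by (intro suminf_nonneg G_summable Gterm_bounds) (auto simp: in_Omega_def)

lemma G_le: assumes "in_Omega \<theta>" "0 \<le> x" shows "Gf \<theta> x \<le> x"
proof -
  have "Gf \<theta> x \<le> (\<Sum>i. (\<theta> (Suc i))\<^sup>2 * x)"
    unfolding Gf_def using assms
    by (intro suminf_le G_summable Gterm_bounds summable_mult2 Omega_sq_summable)
       (auto simp: in_Omega_def)
  also have "\<dots> = (\<Sum>i. (\<theta> (Suc i))\<^sup>2) * x"
    by (rule suminf_mult2[symmetric]) (rule Omega_sq_summable[OF assms(1)])
  also have "\<dots> \<le> x" using Omega_sq_summable(2)[OF assms(1)] assms(2)
    by (simp add: mult.commute mult_left_le)
  finally show ?thesis .
qed

lemma G_mono: assumes "in_Omega \<theta>" "0 \<le> x" "x \<le> y" shows "Gf \<theta> x \<le> Gf \<theta> y"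
  unfolding Gf_def
proof (rule suminf_le)
  fix i
  have t: "0 \<le> \<theta> (Suc i)" using assms(1) by (simp add: in_Omega_def)
  have "exp (- \<theta> (Suc i) * y) \<le> exp (- \<theta> (Suc i) * x)"
    using t assms by (simp add: mult_left_mono)
  then show "\<theta> (Suc i) * (1 - exp (- \<theta> (Suc i) * x)) \<le> \<theta> (Suc i) * (1 - exp (- \<theta> (Suc i) * y))"
    using t by (intro mult_left_mono) auto
qed (use assms G_summable in auto)



lemma chernoff_partial:
  assumes P: "prob_space M" and Om: "in_Omega \<theta>"
    and I: "prob_space.indep_vars M (\<lambda>_. borel) X {1..}"
    and D: "\<And>i. 1 \<le> i \<Longrightarrow> 0 < \<theta> i \<Longrightarrow> distributed M lborel (X i) (exponential_density (\<theta> i))"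
    and a: "0 \<le> a" and ab: "a \<le> b"
  shows "emeasure M {\<omega>\<in>space M. y < (\<Sum>i<N. \<theta> (Suc i) * indicator {a..b} (X (Suc i) \<omega>))}
          \<le> ennreal (exp ((b - a) * Gf \<theta> a - a * y))"
proof -
  interpret prob_space M by fact
  define J where "J = Suc ` {..<N}"
  have J1: "J \<subseteq> {1..}" by (auto simp: J_def)
  have fJ: "finite J" by (simp add: J_def)
  have th0: "\<And>i. 0 \<le> \<theta> i" using Om by (simp add: in_Omega_def)
  have Xm[measurable]: "\<And>i. i \<in> {1..} \<Longrightarrow> X i \<in> borel_measurable M"
    using I by (auto simp: indep_vars_def)
  define S where "S \<omega> = (\<Sum>i\<in>J. \<theta> i * indicator {a..b} (X i \<omega>))" for \<omega>
  have S_eq: "(\<Sum>i<N. \<theta> (Suc i) * indicator {a..b} (X (Suc i) \<omega>)) = S \<omega>" for \<omega>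
    unfolding S_def J_def by (subst sum.reindex) auto
  define F where "F i \<omega> = ennreal (exp (a * (\<theta> i * indicator {a..b} (X i \<omega>))))" for i \<omega>
  have Sm[measurable]: "S \<in> borel_measurable M"
    unfolding S_def using J1 by (intro borel_measurable_sum) (auto intro!: borel_measurable_times)
  have "emeasure M {\<omega>\<in>space M. y < S \<omega>} = (\<integral>\<^sup>+\<omega>. indicator {\<omega>\<in>space M. y < S \<omega>} \<omega> \<partial>M)"
    by (simp add: nn_integral_indicator)
  also have "\<dots> \<le> (\<integral>\<^sup>+\<omega>. ennreal (exp (a * (S \<omega> - y))) \<partial>M)"
  proof (rule nn_integral_mono)
    fix \<omega> assume "\<omega> \<in> space M"
    show "indicator {\<omega>\<in>space M. y < S \<omega>} \<omega> \<le> ennreal (exp (a * (S \<omega> - y)))"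
    proof (cases "y < S \<omega>")
      case True
      then have "0 \<le> a * (S \<omega> - y)" using a by simp
      then show ?thesis using True by (simp add: indicator_def)
    qed (simp add: indicator_def)
  qed
  also have "\<dots> = (\<integral>\<^sup>+\<omega>. ennreal (exp (- a * y)) * (\<Prod>i\<in>J. F i \<omega>) \<partial>M)"
  proof (rule nn_integral_cong)
    fix \<omega>
    have "exp (a * (S \<omega> - y)) = exp (- a * y) * (\<Prod>i\<in>J. exp (a * (\<theta> i * indicator {a..b} (X i \<omega>))))"
    proof -
      have "a * (S \<omega> - y) = - a * y + (\<Sum>i\<in>J. a * (\<theta> i * indicator {a..b} (X i \<omega>)))"
        unfolding S_def by (simp add: sum_distrib_left[symmetric] algebra_simps del: sum_distrib_left)
      then show ?thesis by (simp only: exp_add exp_sum[OF fJ])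
    qed
    then show "ennreal (exp (a * (S \<omega> - y))) = ennreal (exp (- a * y)) * (\<Prod>i\<in>J. F i \<omega>)"
      by (simp add: F_def prod_ennreal ennreal_mult')
  qed
  also have "\<dots> = ennreal (exp (- a * y)) * (\<Prod>i\<in>J. \<integral>\<^sup>+\<omega>. F i \<omega> \<partial>M)"
  proof -
    have ind: "indep_vars (\<lambda>_. borel) F J"
      unfolding F_def
      by (rule indep_vars_compose2[where X=X and M'="\<lambda>_. borel"])
         (use indep_vars_subset[OF I J1] in auto)
    have "(\<integral>\<^sup>+\<omega>. ennreal (exp (- a * y)) * (\<Prod>i\<in>J. F i \<omega>) \<partial>M)
        = ennreal (exp (- a * y)) * (\<integral>\<^sup>+\<omega>. (\<Prod>i\<in>J. F i \<omega>) \<partial>M)"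
    proof (intro nn_integral_cmult borel_measurable_prod_ennreal)
      fix i assume "i \<in> J"
      then have [measurable]: "X i \<in> borel_measurable M" using J1 Xm by auto
      show "F i \<in> borel_measurable M" unfolding F_def by measurable
    qed
    also have "\<dots> = ennreal (exp (- a * y)) * (\<Prod>i\<in>J. \<integral>\<^sup>+\<omega>. F i \<omega> \<partial>M)"
      by (subst indep_vars_nn_integral[OF fJ ind]) auto
    finally show ?thesis .
  qed
  also have "\<dots> \<le> ennreal (exp (- a * y)) * (\<Prod>i\<in>J. ennreal (exp ((b - a) * (\<theta> i * (1 - exp (- \<theta> i * a))))))"
  proof (rule mult_left_mono)
    show "(\<Prod>i\<in>J. \<integral>\<^sup>+\<omega>. F i \<omega> \<partial>M) \<le> (\<Prod>i\<in>J. ennreal (exp ((b - a) * (\<theta> i * (1 - exp (- \<theta> i * a))))))"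
    proof (rule prod_mono_ennreal)
      fix i assume iJ: "i \<in> J"
      show "(\<integral>\<^sup>+\<omega>. F i \<omega> \<partial>M) \<le> ennreal (exp ((b - a) * (\<theta> i * (1 - exp (- \<theta> i * a)))))"
      proof (cases "\<theta> i = 0")
        case True
        then show ?thesis by (simp add: F_def emeasure_space_1)
      next
        case False
        then have tp: "0 < \<theta> i" using th0[of i] by simp
        have "1 \<le> i" using iJ J1 by auto
        show ?thesis unfolding F_def
          by (rule factor_integral[OF P D[OF \<open>1 \<le> i\<close> tp] tp a ab])
      qed
    qed
  qed simp
  also have "\<dots> = ennreal (exp ((b - a) * (\<Sum>i\<in>J. \<theta> i * (1 - exp (- \<theta> i * a))) - a * y))"
    by (simp add: prod_ennreal ennreal_mult[symmetric] exp_sum[symmetric] fJ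
         exp_add[symmetric] sum_distrib_left)
  also have "\<dots> \<le> ennreal (exp ((b - a) * Gf \<theta> a - a * y))"
  proof (intro ennreal_leI exp_mono diff_right_mono mult_left_mono)
    have "(\<Sum>i\<in>J. \<theta> i * (1 - exp (- \<theta> i * a))) = (\<Sum>i<N. \<theta> (Suc i) * (1 - exp (- \<theta> (Suc i) * a)))"
      unfolding J_def by (subst sum.reindex) auto
    also have "\<dots> \<le> Gf \<theta> a" unfolding Gf_def
      by (intro sum_le_suminf G_summable[OF Om a] ballI Gterm_bounds th0 a finite_lessThan)
    finally show "(\<Sum>i\<in>J. \<theta> i * (1 - exp (- \<theta> i * a))) \<le> Gf \<theta> a" .
  qed (use ab in simp)
  finally show ?thesis by (simp add: S_eq)
qed



definition Yf :: "(nat \<Rightarrow> real) \<Rightarrow> (nat \<Rightarrow> 'a \<Rightarrow> real) \<Rightarrow> real \<Rightarrow> real \<Rightarrow> 'a \<Rightarrow> ennreal" where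
  "Yf \<theta> X a b \<omega> = (\<Sum>i. ennreal (\<theta> (Suc i)) * indicator {a..b} (X (Suc i) \<omega>))"

lemma chernoff:
  assumes P: "prob_space M" and Om: "in_Omega \<theta>"
    and I: "prob_space.indep_vars M (\<lambda>_. borel) X {1..}"
    and D: "\<And>i. 1 \<le> i \<Longrightarrow> 0 < \<theta> i \<Longrightarrow> distributed M lborel (X i) (exponential_density (\<theta> i))"
    and a: "0 \<le> a" and ab: "a \<le> b" and y: "0 \<le> y"
  shows "{\<omega>\<in>space M. ennreal y < Yf \<theta> X a b \<omega>} \<in> sets M"
    "emeasure M {\<omega>\<in>space M. ennreal y < Yf \<theta> X a b \<omega>} \<le> ennreal (exp ((b - a) * Gf \<theta> a - a * y))"
proof -
  interpret prob_space M by fact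
  have th0: "\<And>i. 0 \<le> \<theta> i" using Om by (simp add: in_Omega_def)
  have Xm[measurable]: "\<And>i. X (Suc i) \<in> borel_measurable M"
    using I by (auto simp: indep_vars_def)
  define S where "S N \<omega> = (\<Sum>i<N. \<theta> (Suc i) * indicator {a..b} (X (Suc i) \<omega>))" for N \<omega>
  define A where "A N = {\<omega>\<in>space M. y < S N \<omega>}" for N
  have Sm[measurable]: "S N \<in> borel_measurable M" for N
    unfolding S_def by measurable
  have Am: "A N \<in> sets M" for N unfolding A_def by measurable
  have S_nn: "0 \<le> \<theta> (Suc i) * indicator {a..b} (X (Suc i) \<omega>)" for i \<omega>
    using th0 by simp
  have Yeq: "Yf \<theta> X a b \<omega> = (SUP N. ennreal (S N \<omega>))" for \<omega>
    unfolding Yf_def S_def suminf_eq_SUP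
    by (intro SUP_cong refl) (simp add: S_nn ennreal_mult' indicator_def th0)
  have set_eq: "{\<omega>\<in>space M. ennreal y < Yf \<theta> X a b \<omega>} = (\<Union>N. A N)"
    unfolding Yeq A_def by (auto simp: less_SUP_iff ennreal_less_iff y)
  show "{\<omega>\<in>space M. ennreal y < Yf \<theta> X a b \<omega>} \<in> sets M"
    unfolding set_eq using Am by auto
  have inc: "incseq A"
  proof (rule incseq_SucI)
    fix N show "A N \<subseteq> A (Suc N)"
    proof
      fix \<omega> assume "\<omega> \<in> A N"
      moreover have "S N \<omega> \<le> S (Suc N) \<omega>" unfolding S_def using S_nn[of N \<omega>] by simp
      ultimately show "\<omega> \<in> A (Suc N)" unfolding A_def by auto
    qed
  qed
  have "emeasure M (\<Union>N. A N) = (SUP N. emeasure M (A N))"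
    by (rule SUP_emeasure_incseq[symmetric]) (use Am inc in auto)
  also have "\<dots> \<le> ennreal (exp ((b - a) * Gf \<theta> a - a * y))"
    unfolding A_def S_def by (intro SUP_least chernoff_partial[OF P Om I D a ab])
  finally show "emeasure M {\<omega>\<in>space M. ennreal y < Yf \<theta> X a b \<omega>} \<le> ennreal (exp ((b - a) * Gf \<theta> a - a * y))"
    unfolding set_eq .
qed



lemma expectation_mu:
  assumes P: "prob_space M" and Om: "in_Omega \<theta>"
    and I: "prob_space.indep_vars M (\<lambda>_. borel) X {1..}"
    and D: "\<And>i. 1 \<le> i \<Longrightarrow> 0 < \<theta> i \<Longrightarrow> distributed M lborel (X i) (exponential_density (\<theta> i))"
    and l: "0 \<le> l"
  shows "(\<integral>\<^sup>+\<omega>. mu_Icc \<theta> X \<omega> 0 l \<partial>M) = ennreal ((\<theta> 0)\<^sup>2 * l + Gf \<theta> l)"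
proof -
  interpret prob_space M by fact
  have th0: "\<And>i. 0 \<le> \<theta> i" using Om by (simp add: in_Omega_def)
  have Xm[measurable]: "\<And>i. X (Suc i) \<in> borel_measurable M"
    using I by (auto simp: indep_vars_def)
  have trm: "(\<integral>\<^sup>+\<omega>. ennreal (\<theta> (Suc i)) * indicator {0..l} (X (Suc i) \<omega>) \<partial>M)
      = ennreal (\<theta> (Suc i) * (1 - exp (- \<theta> (Suc i) * l)))" for i
  proof -
    have "(\<integral>\<^sup>+\<omega>. ennreal (\<theta> (Suc i)) * indicator {0..l} (X (Suc i) \<omega>) \<partial>M)
        = (\<integral>\<^sup>+\<omega>. ennreal (\<theta> (Suc i)) * indicator (X (Suc i) -` {0..l} \<inter> space M) \<omega> \<partial>M)"
      by (rule nn_integral_cong) (auto split: split_indicator)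
    also have "\<dots> = ennreal (\<theta> (Suc i)) * emeasure M (X (Suc i) -` {0..l} \<inter> space M)"
      by (rule nn_integral_cmult_indicator) measurable
    also have "\<dots> = ennreal (\<theta> (Suc i) * (1 - exp (- \<theta> (Suc i) * l)))"
    proof (cases "\<theta> (Suc i) = 0")
      case True then show ?thesis by simp
    next
      case False
      then have tp: "0 < \<theta> (Suc i)" using th0[of "Suc i"] by simp
      have e: "exp (- \<theta> (Suc i) * l) \<le> 1" using tp l by (simp add: mult_nonneg_nonneg)
      show ?thesis
        using exp_interval[OF P D[OF _ tp] tp order_refl l] e tp
        by (simp add: ennreal_mult)
    qed
    finally show ?thesis .
  qed
  have "(\<integral>\<^sup>+\<omega>. mu_Icc \<theta> X \<omega> 0 l \<partial>M)
      = (\<integral>\<^sup>+\<omega>. ennreal ((\<theta> 0)\<^sup>2 * l) \<partial>M)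
        + (\<integral>\<^sup>+\<omega>. (\<Sum>i. ennreal (\<theta> (Suc i)) * indicator {0..l} (X (Suc i) \<omega>)) \<partial>M)"
    unfolding mu_Icc_def by (subst nn_integral_add) auto
  also have "\<dots> = ennreal ((\<theta> 0)\<^sup>2 * l) + (\<Sum>i. ennreal (\<theta> (Suc i) * (1 - exp (- \<theta> (Suc i) * l))))"
    by (subst nn_integral_suminf) (auto simp: trm emeasure_space_1)
  also have "\<dots> = ennreal ((\<theta> 0)\<^sup>2 * l) + ennreal (Gf \<theta> l)"
    unfolding Gf_def
    by (subst suminf_ennreal2) ((rule Gterm_bounds th0 l G_summable[OF Om l])+, rule refl)
  also have "\<dots> = ennreal ((\<theta> 0)\<^sup>2 * l + Gf \<theta> l)"
    using G_nonneg[OF Om l] l by (simp add: ennreal_plus)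
  finally show ?thesis .
qed



lemma numeric:
  fixes l \<delta> t G_a G_l a :: real and n k :: nat
  assumes n2: "2 \<le> n" and na: "real n \<le> a" and al: "a \<le> l" and la: "l < a + 1 / n"
    and ln1: "l < real n + 1" and kd: "k / n \<le> \<delta> + 2 / n" and d0: "0 \<le> \<delta>"
    and Ga0: "0 \<le> G_a" and GaGl: "G_a \<le> G_l" and Gll: "G_l \<le> l" and t0: "0 \<le> t"
    and lnl: "3 \<le> ln l"
  shows "t * \<delta> + (k / n) * G_a / a + 5 * ln a / a \<le> 2 * \<delta> / l * (t * l + G_l) + 13 * ln l / l"
proof -
  have n0: "0 < real n" using n2 by simp
  have a2: "2 \<le> a" using n2 na by simp
  have a0: "0 < a" using a2 by simp
  have l0: "0 < l" using a0 al by simp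
  have Gl0: "0 \<le> G_l" using Ga0 GaGl by simp
  have l2a: "l \<le> 2 * a"
  proof -
    have "1 / real n \<le> 1" using n2 by simp
    then show ?thesis using la a2 by linarith
  qed
  have l2n: "l \<le> 2 * real n" using ln1 n2 by simp
  have st1: "(k / n) * G_a / a \<le> (\<delta> + 2 / n) * G_l / a"
    using kd Ga0 GaGl a0 d0 n0
    by (intro divide_right_mono mult_mono) auto
  have st2: "\<delta> * G_l / a \<le> 2 * \<delta> * G_l / l"
  proof -
    have "\<delta> * G_l / a = \<delta> * G_l * 2 / (2 * a)" using a0 by simp
    also have "\<dots> \<le> \<delta> * G_l * 2 / l"
      using l0 l2a d0 Gl0 by (intro divide_left_mono) (auto simp: mult_pos_pos)
    finally show ?thesis by (simp add: algebra_simps)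
  qed
  have st3: "(2 / n) * G_l / a \<le> 8 / l"
  proof -
    have "(2 / n) * G_l / a \<le> (2 / n) * l / a"
      using Gll n0 a0 by (intro divide_right_mono mult_left_mono) auto
    also have "\<dots> = 2 * l / (n * a)" by simp
    also have "\<dots> \<le> 2 * l / (n * (l / 2))"
      using l2a n0 l0 a0 by (intro divide_left_mono mult_left_mono mult_pos_pos) auto
    also have "\<dots> = 4 / n" using l0 by simp
    also have "\<dots> \<le> 8 / l"
      using l2n n0 l0 by (simp add: field_simps)
    finally show ?thesis .
  qed
  have st4: "5 * ln a / a \<le> 10 * ln l / l"
  proof -
    have lna: "0 \<le> ln a" "ln a \<le> ln l" using a2 al by auto
    have "5 * ln a / a \<le> 5 * ln l / a" using lna a0 by (intro divide_right_mono) auto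
    also have "\<dots> = 10 * ln l / (2 * a)" by simp
    also have "\<dots> \<le> 10 * ln l / l"
      using l2a l0 lnl a2 al by (intro divide_left_mono) auto
    finally show ?thesis .
  qed
  have st5: "8 / l \<le> 3 * ln l / l" using lnl l0 by (intro divide_right_mono) auto
  have st6: "t * \<delta> + 2 * \<delta> * G_l / l = 2 * \<delta> / l * (t * l + G_l) - t * \<delta>"
    using l0 by (simp add: field_simps)
  have st7: "0 \<le> t * \<delta>" using t0 d0 by simp
  have "(\<delta> + 2 / n) * G_l / a = \<delta> * G_l / a + (2 / n) * G_l / a" using n0 a0 by (simp add: field_simps)
  then have "t * \<delta> + (k / n) * G_a / a + 5 * ln a / a
      \<le> t * \<delta> + 2 * \<delta> * G_l / l + 8 / l + 10 * ln l / l"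
    using st1 st2 st3 st4 by linarith
  also have "\<dots> \<le> 2 * \<delta> / l * (t * l + G_l) + 3 * ln l / l + 10 * ln l / l"
    using st5 st6 st7 by linarith
  also have "\<dots> = 2 * \<delta> / l * (t * l + G_l) + 13 * ln l / l" by (simp add: field_simps)
  finally show ?thesis .
qed



lemma Yf_mono:
  assumes "\<And>i. 0 \<le> \<theta> i" "a \<le> c" "d \<le> b"
  shows "Yf \<theta> X c d \<omega> \<le> Yf \<theta> X a b \<omega>"
  unfolding Yf_def
proof (rule suminf_le)
  fix i
  have "indicator {c..d} (X (Suc i) \<omega>) \<le> (indicator {a..b} (X (Suc i) \<omega>) :: ennreal)"
    using assms by (auto split: split_indicator)
  then show "ennreal (\<theta> (Suc i)) * indicator {c..d} (X (Suc i) \<omega>)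
      \<le> ennreal (\<theta> (Suc i)) * indicator {a..b} (X (Suc i) \<omega>)"
    by (rule mult_left_mono) simp
qed auto

theorem mainTheorem9:
  fixes M :: "'a measure" and \<theta> :: "nat \<Rightarrow> real" and X :: "nat \<Rightarrow> 'a \<Rightarrow> real"
  assumes "prob_space M"
    and "in_Omega \<theta>"
    and "prob_space.indep_vars M (\<lambda>_. borel) X {1..}"
    and "\<And>i. 1 \<le> i \<Longrightarrow> 0 < \<theta> i \<Longrightarrow> distributed M lborel (X i) (exponential_density (\<theta> i))"
  shows "AE \<omega> in M. \<exists>L0::real. \<forall>l \<delta>. L0 \<le> l \<longrightarrow> 0 \<le> \<delta> \<longrightarrow> \<delta> \<le> l \<longrightarrow>
            mu_Icc \<theta> X \<omega> l (l + \<delta>)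
              \<le> ennreal (2 * \<delta> / l) * (\<integral>\<^sup>+ \<omega>'. mu_Icc \<theta> X \<omega>' 0 l \<partial>M)
                 + ennreal (13 * ln l / l)"
proof -
  note P = assms(1) and Om = assms(2) and I = assms(3) and D = assms(4)
  interpret prob_space M by fact
  have th0: "\<And>i. 0 \<le> \<theta> i" using Om by (simp add: in_Omega_def)
  define aa where "aa n j = real n + real j / real n" for n j :: nat
  define yy where "yy n j k = (real k / real n) * Gf \<theta> (aa n j) / aa n j + 5 * ln (aa n j) / aa n j"
    for n j k :: nat
  define Ev where "Ev n j k = {\<omega>\<in>space M. ennreal (yy n j k) < Yf \<theta> X (aa n j) (aa n j + real k / real n) \<omega>}"
    for n j k :: nat
  define B where "B n = (\<Union>p\<in>{..<n} \<times> {..<3*n^2}. Ev n (fst p) (snd p))" for n :: nat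
  have aa_ge: "real n \<le> aa n j" for n j by (simp add: aa_def)
  have yy_nn: "0 \<le> yy n j k" if "1 \<le> n" for n j k
  proof -
    have a1: "1 \<le> aa n j" using aa_ge[of n j] that by linarith
    then have "0 \<le> Gf \<theta> (aa n j)" by (intro G_nonneg Om) simp
    then show ?thesis using a1 by (simp add: yy_def)
  qed
  have Ev_sets: "Ev n j k \<in> sets M" if "1 \<le> n" for n j k
    unfolding Ev_def using aa_ge[of n j] that yy_nn[OF that]
    by (intro chernoff(1)[OF P Om I D]) auto
  have Ev_bound: "emeasure M (Ev n j k) \<le> ennreal (1 / real n ^ 5)" if "1 \<le> n" for n j k
  proof -
    let ?a = "aa n j"
    have a1: "1 \<le> ?a" using aa_ge[of n j] that by linarith
    have "emeasure M (Ev n j k) \<le> ennreal (exp ((?a + real k / real n - ?a) * Gf \<theta> ?a - ?a * yy n j k))"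
      unfolding Ev_def using a1 yy_nn[OF that]
      by (intro chernoff(2)[OF P Om I D]) auto
    also have "(?a + real k / real n - ?a) * Gf \<theta> ?a - ?a * yy n j k = - (real 5 * ln ?a)"
      using a1 by (simp add: yy_def field_simps)
    also have "exp (- (real 5 * ln ?a)) = inverse (?a ^ 5)"
    proof -
      have "exp (real 5 * ln ?a) = exp (ln ?a) ^ 5" by (rule exp_of_nat_mult)
      also have "\<dots> = ?a ^ 5" using a1 by simp
      finally show ?thesis by (simp add: exp_minus)
    qed
    also have "inverse (?a ^ 5) \<le> 1 / real n ^ 5"
      using aa_ge[of n j] that by (simp add: inverse_eq_divide divide_left_mono power_mono)
    finally show ?thesis by (simp add: ennreal_leI order_trans)
  qed
  have B_sets: "B n \<in> sets M" for n
  proof (cases "n = 0")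
    case True then show ?thesis by (simp add: B_def)
  next
    case False then show ?thesis unfolding B_def using Ev_sets by (intro sets.finite_UN) auto
  qed
  have B_meas: "measure M (B n) \<le> 3 * inverse (real n ^ 2)" for n
  proof (cases "n = 0")
    case True then show ?thesis by (simp add: B_def)
  next
    case False
    then have n1: "1 \<le> n" by simp
    have "emeasure M (B n) \<le> (\<Sum>p\<in>{..<n} \<times> {..<3*n^2}. emeasure M (Ev n (fst p) (snd p)))"
      unfolding B_def using Ev_sets[OF n1] by (intro emeasure_subadditive_finite) auto
    also have "\<dots> \<le> (\<Sum>p\<in>{..<n} \<times> {..<3*n^2}. ennreal (1 / real n ^ 5))"
      by (intro sum_mono Ev_bound n1)
    also have "\<dots> = ennreal (real (n * (3 * n^2)) * (1 / real n ^ 5))"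
    proof -
      have "(\<Sum>p\<in>{..<n} \<times> {..<3*n^2}. ennreal (1 / real n ^ 5))
          = of_nat (card ({..<n} \<times> {..<3*n^2})) * ennreal (1 / real n ^ 5)"
        by (rule sum_constant)
      also have "card ({..<n} \<times> {..<3*n^2}) = n * (3 * n^2)" by (simp add: card_cartesian_product)
      also have "(of_nat (n * (3 * n^2)) :: ennreal) = ennreal (real (n * (3 * n^2)))"
        by (rule ennreal_of_nat_eq_real_of_nat)
      also have "ennreal (real (n * (3 * n^2))) * ennreal (1 / real n ^ 5)
          = ennreal (real (n * (3 * n^2)) * (1 / real n ^ 5))"
        by (rule ennreal_mult[symmetric]) auto
      finally show ?thesis .
    qed
    also have "real (n * (3 * n^2)) * (1 / real n ^ 5) = 3 * inverse (real n ^ 2)"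
      using n1 by (simp add: field_simps power_def)
    finally have "emeasure M (B n) \<le> ennreal (3 * inverse (real n ^ 2))" .
    then show ?thesis by (simp add: emeasure_eq_measure)
  qed
  have BC: "AE \<omega> in M. eventually (\<lambda>n. \<omega> \<in> space M - B n) sequentially"
  proof (rule borel_cantelli_AE1)
    show "\<And>n. B n \<in> sets M" by (rule B_sets)
    show "\<And>n. emeasure M (B n) < \<infinity>" by (simp add: less_top[symmetric])
    show "summable (\<lambda>n. measure M (B n))"
    proof (rule summable_comparison_test')
      show "summable (\<lambda>n. 3 * inverse (real n ^ 2))"
        by (intro summable_mult inverse_power_summable) simp
      show "norm (measure M (B n)) \<le> 3 * inverse (real n ^ 2)" for n
        using B_meas[of n] by simp
    qed
  qed
  show ?thesis
    using BC
  proof (rule eventually_mono)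
    fix \<omega> assume "eventually (\<lambda>n. \<omega> \<in> space M - B n) sequentially"
    then obtain N0 where N0: "\<And>n. N0 \<le> n \<Longrightarrow> \<omega> \<in> space M - B n"
      by (auto simp: eventually_sequentially)
    have \<omega>sp: "\<omega> \<in> space M" using N0[of N0] by simp
    show "\<exists>L0::real. \<forall>l \<delta>. L0 \<le> l \<longrightarrow> 0 \<le> \<delta> \<longrightarrow> \<delta> \<le> l \<longrightarrow>
            mu_Icc \<theta> X \<omega> l (l + \<delta>)
              \<le> ennreal (2 * \<delta> / l) * (\<integral>\<^sup>+ \<omega>'. mu_Icc \<theta> X \<omega>' 0 l \<partial>M)
                 + ennreal (13 * ln l / l)"
    proof (intro exI allI impI)
      fix l \<delta> :: real
      assume L: "max (real N0 + 1) (exp 3) \<le> l" and d0: "0 \<le> \<delta>" and dl: "\<delta> \<le> l"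
      have e3: "4 \<le> exp (3::real)" using exp_ge_add_one_self[of 3] by simp
      have l4: "4 \<le> l" using L e3 by linarith
      have lnl: "3 \<le> ln l"
      proof -
        have "ln (exp 3) \<le> ln l" using L by (subst ln_le_cancel_iff) auto
        then show ?thesis by simp
      qed
      define n where "n = nat \<lfloor>l\<rfloor>"
      have nl: "real n \<le> l" "l < real n + 1" using l4 by (auto simp: n_def)
      have n2: "2 \<le> n" using nl l4 by linarith
      have nN0: "N0 \<le> n" using nl L by linarith
      have n0: "0 < real n" using n2 by simp
      define j where "j = nat \<lfloor>(l - n) * n\<rfloor>"
      have jb: "real j \<le> (l - n) * n" "(l - n) * n < real j + 1"
        using nl n0 by (auto simp: j_def)
      have jn: "j < n"
      proof -
        have "(l - n) * n < 1 * real n" using nl n0 by (intro mult_strict_right_mono) auto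
        then show ?thesis using jb by linarith
      qed
      define a where "a = aa n j"
      have a_le: "a \<le> l"
      proof -
        have "real j / n \<le> l - n" using jb n0 by (simp add: divide_le_eq)
        then show ?thesis by (simp add: a_def aa_def)
      qed
      have la: "l < a + 1 / n"
      proof -
        have "l - n < (real j + 1) / n" using jb n0 by (simp add: less_divide_eq)
        then show ?thesis by (simp add: a_def aa_def add_divide_distrib)
      qed
      have na: "real n \<le> a" using aa_ge by (simp add: a_def)
      define k where "k = nat \<lceil>(l + \<delta> - a) * n\<rceil>"
      have kb: "(l + \<delta> - a) * n \<le> real k" "real k < (l + \<delta> - a) * n + 1"
        using a_le d0 n0 by (auto simp: k_def) linarith+
      have k3: "k < 3 * n^2"
      proof -
        have "(l + \<delta> - a) * n \<le> (real n + 2) * n"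
          using nl dl na n0 by (intro mult_right_mono) auto
        then have "real k < real n * real n + 2 * real n + 1" using kb by (simp add: algebra_simps)
        also have "\<dots> \<le> 3 * real n * real n"
        proof -
          have "real n * 2 \<le> real n * real n" using n2 by (intro mult_left_mono) auto
          then have "2 * real n + 1 \<le> 2 * real n * real n" using n2 by linarith
          then show ?thesis by simp
        qed
        finally have "real k < real (3 * n^2)" by (simp add: power2_eq_square)
        then show ?thesis by linarith
      qed
      have bl: "l + \<delta> \<le> a + real k / n"
      proof -
        have "l + \<delta> - a \<le> real k / n" using kb(1) n0 by (simp add: pos_le_divide_eq)
        then show ?thesis by linarith
      qed
      have kd: "real k / n \<le> \<delta> + 2 / n"
      proof -
        have "real k / n < ((l + \<delta> - a) * n + 1) / n" using kb n0 by (simp add: divide_strict_right_mono)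
        also have "\<dots> = l + \<delta> - a + 1 / n" using n0 by (simp add: field_simps)
        also have "\<dots> \<le> \<delta> + 2 / n" using la by simp
        finally show ?thesis by simp
      qed
      have "\<omega> \<notin> B n" using N0[OF nN0] by simp
      then have "\<omega> \<notin> Ev n j k" using jn k3 unfolding B_def by auto
      then have Ybd: "Yf \<theta> X a (a + real k / n) \<omega> \<le> ennreal (yy n j k)"
        using \<omega>sp by (auto simp: Ev_def a_def not_less)
      have l0: "0 \<le> l" using l4 by simp
      have a0: "0 \<le> a" using na n0 by simp
      have t0: "0 \<le> (\<theta> 0)\<^sup>2" by simp
      have Ga0: "0 \<le> Gf \<theta> a" using na n0 by (intro G_nonneg Om) simp
      have "mu_Icc \<theta> X \<omega> l (l + \<delta>) = ennreal ((\<theta> 0)\<^sup>2 * \<delta>) + Yf \<theta> X l (l + \<delta>) \<omega>"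
        by (simp add: mu_Icc_def Yf_def)
      also have "\<dots> \<le> ennreal ((\<theta> 0)\<^sup>2 * \<delta>) + ennreal (yy n j k)"
        using order_trans[OF Yf_mono[where \<theta>=\<theta> and X=X and \<omega>=\<omega>, OF th0 a_le bl] Ybd] by (rule add_left_mono)
      also have "\<dots> = ennreal ((\<theta> 0)\<^sup>2 * \<delta> + yy n j k)"
        using yy_nn[of n j k] n2 d0 by (simp add: ennreal_plus)
      also have "\<dots> \<le> ennreal (2 * \<delta> / l * ((\<theta> 0)\<^sup>2 * l + Gf \<theta> l) + 13 * ln l / l)"
      proof (rule ennreal_leI)
        show "(\<theta> 0)\<^sup>2 * \<delta> + yy n j k \<le> 2 * \<delta> / l * ((\<theta> 0)\<^sup>2 * l + Gf \<theta> l) + 13 * ln l / l"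
          unfolding yy_def a_def[symmetric]
          using numeric[OF n2 na a_le la nl(2) kd d0 Ga0 G_mono[OF Om a0 a_le] G_le[OF Om l0] t0 lnl]
          by (simp add: add.assoc)
      qed
      also have "\<dots> = ennreal (2 * \<delta> / l) * (\<integral>\<^sup>+ \<omega>'. mu_Icc \<theta> X \<omega>' 0 l \<partial>M) + ennreal (13 * ln l / l)"
      proof -
        have g: "0 \<le> (\<theta> 0)\<^sup>2 * l + Gf \<theta> l" using G_nonneg[OF Om l0] l0 by simp
        have h: "0 \<le> 13 * ln l / l" using lnl l0 by simp
        have q: "0 \<le> 2 * \<delta> / l" using d0 l0 by simp
        have E: "(\<integral>\<^sup>+ \<omega>'. mu_Icc \<theta> X \<omega>' 0 l \<partial>M) = ennreal ((\<theta> 0)\<^sup>2 * l + Gf \<theta> l)"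
          by (rule expectation_mu[OF P Om I D l0])
        show ?thesis
          unfolding E ennreal_plus[OF mult_nonneg_nonneg[OF q g] h] ennreal_mult[OF q g] ..
      qed
      finally show "mu_Icc \<theta> X \<omega> l (l + \<delta>)
              \<le> ennreal (2 * \<delta> / l) * (\<integral>\<^sup>+ \<omega>'. mu_Icc \<theta> X \<omega>' 0 l \<partial>M)
                 + ennreal (13 * ln l / l)" .
    qed
  qed
qed


end
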